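(* Let $p$ be a prime and $n,d$ positive integers. For any $k\geq\lceil\frac{d+1}{p-1}\rceil$, if $h:\mathbb{F}_p^k\to\mathbb{F}_p$ satisfies $\deg(h)=k(p-1)-(d+1)$, then $h$ is a local characterization for $\mathrm{RM}[n,p,d]$, i.e. $\mathrm{RM}[n,p,d]=\mathcal{F}_n(h)$.
   Context: Functions $\mathbb{F}_q^m\to\mathbb{F}_q$ are identified with their unique polynomial representations with individual degrees in $\{0,\dots,q-1\}$; the degree is the maximal total degree of a monomial with nonzero coefficient. $\mathrm{RM}[n,q,d]$ is the set of functions $\mathbb{F}_q^n\to\mathbb{F}_q$ of degree at most $d$. For $f,g:\mathbb{F}_q^k\to\mathbb{F}_q$, $\langle f,g\rangle=\sum_{\alpha\in\mathbb{F}_q^k}f(\alpha)g(\alpha)\in\mathbb{F}_q$. Let $\mathcal{T}_{n,k}$ be the set of affine maps $T:\mathbb{F}_q^k\to\mathbb{F}_q^n$, and for $f:\mathbb{F}_q^n\to\mathbb{F}_q$ let $f\circ T:\mathbb{F}_q^k\to\mathbb{F}_q$, $x\mapsto f(T(x))$. For $h:\mathbb{F}_q^k\to\mathbb{F}_q$, $\mathcal{F}_n(h)=\{f:\mathbb{F}_q^n\to\mathbb{F}_q : \langle f\circ T,h\rangle=0 \text{ for all } T\in\mathcal{T}_{n,k}\}$, and $h$ is called a local characterization for $\mathcal{F}_n(h)$. *)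

theory Defs
  imports Complex_Main "HOL-Computational_Algebra.Primes" "HOL-Library.Cardinality"
begin

text \<open>The field F_q is modelled by a finite field type 'a (q = CARD('a)).
  Points of F_q^n are functions nat => 'a vanishing at indices >= n.\<close>

definition vecs :: "nat \<Rightarrow> (nat \<Rightarrow> 'a::zero) set" where
  "vecs n = {x. \<forall>i\<ge>n. x i = 0}"

definition funs :: "nat \<Rightarrow> ((nat \<Rightarrow> 'a::zero) \<Rightarrow> 'a) set" where
  "funs n = {f. \<forall>x. x \<notin> vecs n \<longrightarrow> f x = 0}"

definition exps :: "'a::finite itself \<Rightarrow> nat \<Rightarrow> (nat \<Rightarrow> nat) set" where
  "exps (t::'a itself) n = {e. (\<forall>i<n. e i < CARD('a)) \<and> (\<forall>i\<ge>n. e i = 0)}"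

definition monom :: "nat \<Rightarrow> (nat \<Rightarrow> nat) \<Rightarrow> (nat \<Rightarrow> 'a::comm_ring_1) \<Rightarrow> 'a" where
  "monom n e x = (\<Prod>i<n. x i ^ e i)"

text \<open>deg f <= D: the reduced polynomial of f only has monomials of total degree <= D
  (for D < 0 this means f = 0).\<close>
definition deg_le :: "nat \<Rightarrow> ((nat \<Rightarrow> 'a::{finite,field}) \<Rightarrow> 'a) \<Rightarrow> int \<Rightarrow> bool" where
  "deg_le n f D = (\<exists>c :: (nat \<Rightarrow> nat) \<Rightarrow> 'a. \<forall>x\<in>vecs n.
      f x = (\<Sum>e\<in>{e\<in>exps TYPE('a) n. int (\<Sum>i<n. e i) \<le> D}. c e * monom n e x))"

definition has_degree :: "nat \<Rightarrow> ((nat \<Rightarrow> 'a::{finite,field}) \<Rightarrow> 'a) \<Rightarrow> int \<Rightarrow> bool" where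
  "has_degree n f D = (deg_le n f D \<and> \<not> deg_le n f (D - 1))"

definition RM :: "nat \<Rightarrow> nat \<Rightarrow> ((nat \<Rightarrow> 'a::{finite,field}) \<Rightarrow> 'a) set" where
  "RM n d = {f \<in> funs n. deg_le n f (int d)}"

definition inner_prod :: "nat \<Rightarrow> ((nat \<Rightarrow> 'a::{finite,field}) \<Rightarrow> 'a) \<Rightarrow> ((nat \<Rightarrow> 'a) \<Rightarrow> 'a) \<Rightarrow> 'a" where
  "inner_prod k f g = (\<Sum>\<alpha>\<in>vecs k. f \<alpha> * g \<alpha>)"

definition affine_maps :: "nat \<Rightarrow> nat \<Rightarrow> ((nat \<Rightarrow> 'a::comm_ring_1) \<Rightarrow> (nat \<Rightarrow> 'a)) set" where
  "affine_maps k n = {T. \<exists>A b. \<forall>x. T x =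
      (\<lambda>i. if i < n then (\<Sum>j<k. A i j * x j) + b i else 0)}"

definition Fchar :: "nat \<Rightarrow> nat \<Rightarrow> ((nat \<Rightarrow> 'a::{finite,field}) \<Rightarrow> 'a) \<Rightarrow> ((nat \<Rightarrow> 'a) \<Rightarrow> 'a) set" where
  "Fchar n k h = {f \<in> funs n. \<forall>T\<in>affine_maps k n. inner_prod k (f \<circ> T) h = 0}"

end

theory Submission imports Defs "HOL-Computational_Algebra.Polynomial" "HOL-Library.FuncSet" begin


lemma of_nat_card_zero: "of_nat CARD('a::{finite,ring_1}) = (0::'a)"
proof -
  have "(\<Sum>x::'a\<in>UNIV. x + 1) = (\<Sum>x\<in>UNIV. x)"
    by (rule sum.reindex_bij_witness[of _ "\<lambda>x. x - 1" "\<lambda>x. x + 1"]) auto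
  hence "(\<Sum>x::'a\<in>UNIV. x) + (\<Sum>x::'a\<in>UNIV. 1) = (\<Sum>x\<in>UNIV. x)"
    by (simp add: sum.distrib)
  thus ?thesis by simp
qed

lemma CHAR_eq_card:
  assumes "prime CARD('a::{finite,field})"
  shows "CHAR('a) = CARD('a)"
proof -
  have "CHAR('a) dvd CARD('a)"
    using of_nat_card_zero[where 'a='a] by (simp add: of_nat_eq_0_iff_char_dvd)
  moreover have "CHAR('a) \<noteq> 1" by simp
  ultimately show ?thesis using assms unfolding prime_nat_iff by blast
qed

lemma of_nat_nonzero:
  assumes "prime CARD('a::{finite,field})" "0 < t" "t < CARD('a)"
  shows "of_nat t \<noteq> (0::'a)"
proof
  assume "of_nat t = (0::'a)"
  hence "CHAR('a) dvd t" by (simp add: of_nat_eq_0_iff_char_dvd)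
  hence "CARD('a) dvd t" using CHAR_eq_card[OF assms(1)] by simp
  with assms show False using dvd_imp_le[of "CARD('a)" t] by simp
qed
lemma fermat_field:
  assumes "(x::'a::{finite,field}) \<noteq> 0"
  shows "x ^ (CARD('a) - 1) = 1"
proof -
  let ?U = "UNIV - {0::'a}"
  have cU: "card ?U = CARD('a) - 1" by (simp add: card_Diff_singleton)
  have "(\<Prod>y\<in>?U. y) = (\<Prod>y\<in>?U. x * y)"
    by (rule prod.reindex_bij_witness[of _ "\<lambda>y. x * y" "\<lambda>y. y / x"]) (use assms in \<open>simp_all add: field_simps\<close>)
  also have "\<dots> = x ^ card ?U * (\<Prod>y\<in>?U. y)" by (simp add: prod.distrib)
  finally have "x ^ card ?U * (\<Prod>y\<in>?U. y) = 1 * (\<Prod>y\<in>?U. y)" by simp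
  moreover have "(\<Prod>y\<in>?U. y) \<noteq> 0" by simp
  ultimately show ?thesis using cU by (metis mult_right_cancel)
qed

definition psum :: "'a itself \<Rightarrow> nat \<Rightarrow> 'a::{finite,field}" where
  "psum _ t = (\<Sum>x::'a\<in>UNIV. x ^ t)"

lemma psum_0: "psum TYPE('a::{finite,field}) 0 = 0"
  by (simp add: psum_def of_nat_card_zero)

lemma sum_UNIV_split0:
  "(\<Sum>x::'a::{finite,field}\<in>UNIV. g x) = g 0 + (\<Sum>x\<in>UNIV - {0}. g x)"
  by (simp add: sum.remove)

lemma psum_dvd:
  assumes "prime CARD('a::{finite,field})" "t \<ge> 1" "(CARD('a) - 1) dvd t"
  shows "psum TYPE('a) t = -1"
proof -
  obtain q where q: "t = (CARD('a) - 1) * q" using assms by blast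
  have "\<forall>x::'a\<in>UNIV - {0}. x ^ t = 1" using fermat_field[where 'a='a] by (simp add: q power_mult)
  hence "psum TYPE('a) t = 0 ^ t + (\<Sum>x::'a\<in>UNIV - {0}. 1)"
    unfolding psum_def by (subst sum_UNIV_split0) simp
  also have "\<dots> = of_nat (CARD('a) - 1)" using assms(2) by (simp add: card_Diff_singleton)
  also have "\<dots> = of_nat CARD('a) - 1"
    using assms(1) prime_ge_1_nat of_nat_diff by (metis of_nat_1)
  also have "\<dots> = -1" by (simp add: of_nat_card_zero)
  finally show ?thesis .
qed

lemma exists_pow_ne1:
  assumes "0 < r" "r < CARD('a::{finite,field}) - 1"
  shows "\<exists>y::'a. y \<noteq> 0 \<and> y ^ r \<noteq> 1"
proof (rule ccontr)
  assume "\<not> ?thesis"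
  hence all: "\<forall>y::'a. y \<noteq> 0 \<longrightarrow> y ^ r = 1" by blast
  define P :: "'a poly" where "P = Polynomial.monom 1 r + [:-1:]"
  have degP: "degree P = r" unfolding P_def using assms(1)
    by (subst degree_add_eq_left) (simp_all add: degree_monom_eq)
  have "P \<noteq> 0" using degP assms(1) by auto
  hence "card {x. poly P x = 0} \<le> r" using card_poly_roots_bound degP by metis
  moreover have "UNIV - {0} \<subseteq> {x. poly P x = 0}"
    using all by (auto simp: P_def poly_monom)
  hence "card (UNIV - {0::'a}) \<le> card {x. poly P x = 0}"
    by (intro card_mono) auto
  ultimately show False using assms(2) by (simp add: card_Diff_singleton)
qed

lemma psum_ndvd:
  assumes "prime CARD('a::{finite,field})" "t \<ge> 1" "\<not> (CARD('a) - 1) dvd t"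
  shows "psum TYPE('a) t = 0"
proof -
  let ?q = "CARD('a) - 1"
  define r where "r = t mod ?q"
  have r0: "0 < r" using assms(3) r_def by (simp add: dvd_eq_mod_eq_0)
  have q0: "?q > 0" using prime_gt_1_nat[OF assms(1)] by simp
  have r1: "r < ?q" using q0 r_def by simp
  obtain y :: 'a where y: "y \<noteq> 0" "y ^ r \<noteq> 1" using exists_pow_ne1 r0 r1 by blast
  have "y ^ t = y ^ r"
  proof -
    have "t = ?q * (t div ?q) + r" by (simp add: r_def)
    hence "y ^ t = (y ^ ?q) ^ (t div ?q) * y ^ r" by (metis power_add power_mult)
    thus ?thesis using fermat_field[OF y(1)] by simp
  qed
  have "psum TYPE('a) t = (\<Sum>x::'a\<in>UNIV. (y * x) ^ t)"
    unfolding psum_def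
    by (rule sum.reindex_bij_witness[of _ "\<lambda>x. y * x" "\<lambda>x. x / y"]) (use y in \<open>simp_all add: field_simps\<close>)
  also have "\<dots> = y ^ t * psum TYPE('a) t"
    by (simp add: psum_def power_mult_distrib sum_distrib_left)
  finally have "(1 - y ^ t) * psum TYPE('a) t = 0" by (simp add: algebra_simps)
  thus ?thesis using y(2) \<open>y ^ t = y ^ r\<close> by simp
qed

lemma psum_zero_small:
  assumes "prime CARD('a::{finite,field})" "t < CARD('a) - 1"
  shows "psum TYPE('a) t = 0"
proof (cases "t = 0")
  case True thus ?thesis by (simp add: psum_0)
next
  case False
  hence "\<not> (CARD('a) - 1) dvd t" using assms(2) by (auto dest: dvd_imp_le)
  thus ?thesis using psum_ndvd[OF assms(1)] False by simp
qed



definition omega :: "nat \<Rightarrow> 'a::{finite,field} \<Rightarrow> 'a" where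
  "omega r l = (if r = 0 then (if l = 0 then 1 else 0) else - (l ^ (CARD('a) - 1 - r)))"

lemma omega_sum:
  assumes "prime CARD('a::{finite,field})" "r \<le> CARD('a) - 1" "s \<le> CARD('a) - 1"
  shows "(\<Sum>l::'a\<in>UNIV. omega r l * l ^ s) = (if s = r then 1 else 0)"
proof (cases "r = 0")
  case True
  have "(\<Sum>l::'a\<in>UNIV. omega r l * l ^ s) = (\<Sum>l::'a\<in>UNIV. if l = 0 then l ^ s else 0)"
    by (rule sum.cong) (auto simp: omega_def True)
  also have "\<dots> = 0 ^ s" by (simp add: sum.delta)
  finally show ?thesis using True by simp
next
  case False
  let ?q = "CARD('a) - 1"
  have q1: "?q \<ge> 1" using prime_gt_1_nat[OF assms(1)] by simp
  have "(\<Sum>l::'a\<in>UNIV. omega r l * l ^ s) = - psum TYPE('a) (?q - r + s)"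
    by (simp add: omega_def False psum_def sum_negf power_add[symmetric])
  also have "\<dots> = (if s = r then 1 else 0)"
  proof (cases "s = r")
    case True
    hence "?q - r + s = ?q" using assms by simp
    thus ?thesis using True psum_dvd[OF assms(1)] q1 by simp
  next
    case ne: False
    show ?thesis
    proof (cases "?q - r + s = 0")
      case True thus ?thesis using ne psum_0 by simp
    next
      case nz: False
      have "\<not> ?q dvd (?q - r + s)"
      proof
        assume "?q dvd (?q - r + s)"
        then obtain c where c: "?q - r + s = ?q * c" by blast
        have "?q - r + s < ?q * 2" using assms False by simp
        hence "c < 2" using c by (metis mult_less_cancel1)
        moreover have "c \<noteq> 0" using c nz by auto
        ultimately have "c = 1" by simp
        thus False using c ne assms by simp
      qed
      moreover have "?q - r + s \<ge> 1" using nz by linarith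
      ultimately show ?thesis using psum_ndvd[OF assms(1), of "?q - r + s"] ne by simp
    qed
  qed
  finally show ?thesis .
qed

lemma vecs_0: "vecs 0 = {\<lambda>_. 0}"
  by (auto simp: vecs_def)

lemma vecs_Suc: "vecs (Suc n) = (\<lambda>(x,t). x(n:=t)) ` (vecs n \<times> UNIV)"
proof (intro set_eqI iffI)
  fix y assume y: "y \<in> vecs (Suc n)"
  hence "y = (\<lambda>(x,t). x(n:=t)) (y(n:=0), y n)" "(y(n:=0), y n) \<in> vecs n \<times> UNIV"
    by (auto simp: vecs_def)
  thus "y \<in> (\<lambda>(x,t). x(n:=t)) ` (vecs n \<times> UNIV)" by blast
qed (auto simp: vecs_def)

lemma inj_vecs_Suc: "inj_on (\<lambda>(x,t). x(n:=t)) (vecs n \<times> UNIV)"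
proof (rule inj_onI, clarsimp)
  fix x t x' t'
  assume "x \<in> vecs n" "x' \<in> vecs n" and e: "x(n := t) = x'(n := t')"
  hence "t = t'" by (metis fun_upd_same)
  moreover have "x = x'"
  proof
    fix i show "x i = x' i"
      using e \<open>x \<in> vecs n\<close> \<open>x' \<in> vecs n\<close> unfolding vecs_def
      by (cases "i = n") (auto dest: fun_cong[where x=i])
  qed
  ultimately show "x = x' \<and> t = t'" by simp
qed

lemma finite_vecs: "finite (vecs n :: (nat \<Rightarrow> 'a::{finite,zero}) set)"
  by (induction n) (simp_all add: vecs_0 vecs_Suc)

lemma sum_vecs_Suc:
  "(\<Sum>x\<in>vecs (Suc n). g x) = (\<Sum>x\<in>vecs n. \<Sum>t\<in>(UNIV::'a::{finite,zero} set). g (x(n:=t)))"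
proof -
  have "(\<Sum>x\<in>vecs (Suc n). g x) = (\<Sum>p\<in>vecs n \<times> (UNIV::'a set). g ((\<lambda>(x,t). x(n:=t)) p))"
    unfolding vecs_Suc by (rule sum.reindex[OF inj_vecs_Suc, unfolded comp_def])
  also have "\<dots> = (\<Sum>x\<in>vecs n. \<Sum>t\<in>(UNIV::'a set). g (x(n:=t)))"
    by (simp add: sum.cartesian_product finite_vecs split_def)
  finally show ?thesis .
qed

lemma card_vecs: "card (vecs n :: (nat \<Rightarrow> 'a::{finite,zero}) set) = CARD('a) ^ n"
proof (induction n)
  case 0 thus ?case by (simp add: vecs_0)
next
  case (Suc n)
  have "card (vecs (Suc n) :: (nat \<Rightarrow> 'a) set) = (\<Sum>x\<in>(vecs (Suc n) :: (nat \<Rightarrow> 'a) set). 1)" by simp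
  also have "\<dots> = (\<Sum>x\<in>(vecs n :: (nat \<Rightarrow> 'a) set). \<Sum>t\<in>(UNIV::'a set). 1)" by (rule sum_vecs_Suc)
  finally show ?case using Suc by simp
qed

lemma sum_vecs_prod:
  fixes \<phi> :: "nat \<Rightarrow> 'a::{finite,comm_ring_1} \<Rightarrow> 'a"
  shows "(\<Sum>x\<in>vecs n. \<Prod>i<n. \<phi> i (x i)) = (\<Prod>i<n. \<Sum>t\<in>(UNIV::'a::{finite,comm_ring_1} set). \<phi> i t)"
proof (induction n)
  case 0 thus ?case by (simp add: vecs_0)
next
  case (Suc n)
  have "(\<Sum>x\<in>vecs (Suc n). \<Prod>i<Suc n. \<phi> i (x i))
      = (\<Sum>x\<in>vecs n. \<Sum>t\<in>(UNIV::'a set). (\<Prod>i<n. \<phi> i (x i)) * \<phi> n t)"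
    unfolding sum_vecs_Suc
    by (intro sum.cong refl) (simp add: prod.lessThan_Suc)
  also have "\<dots> = (\<Sum>x\<in>vecs n. \<Prod>i<n. \<phi> i (x i)) * (\<Sum>t\<in>(UNIV::'a set). \<phi> n t)"
    by (simp add: sum_product)
  also have "\<dots> = (\<Prod>i<Suc n. \<Sum>t\<in>(UNIV::'a set). \<phi> i t)"
    using Suc by (simp add: prod.lessThan_Suc)
  finally show ?case .
qed

lemma sum_monom:
  "(\<Sum>x\<in>vecs n. Defs.monom n e x) = (\<Prod>i<n. psum TYPE('a::{finite,field}) (e i))"
  unfolding Defs.monom_def psum_def by (rule sum_vecs_prod)

lemma exps_0: "exps TYPE('a::finite) 0 = {\<lambda>_. 0}"
  by (auto simp: exps_def)

lemma exps_Suc: "exps TYPE('a::finite) (Suc n) = (\<lambda>(x,t). x(n:=t)) ` (exps TYPE('a) n \<times> {..<CARD('a)})"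
proof (intro set_eqI iffI)
  fix y assume y: "y \<in> exps TYPE('a) (Suc n)"
  hence "y = (\<lambda>(x,t). x(n:=t)) (y(n:=0), y n)" "(y(n:=0), y n) \<in> exps TYPE('a) n \<times> {..<CARD('a)}"
    by (auto simp: exps_def)
  thus "y \<in> (\<lambda>(x,t). x(n:=t)) ` (exps TYPE('a) n \<times> {..<CARD('a)})" by blast
qed (auto simp: exps_def)

lemma inj_exps_Suc: "inj_on (\<lambda>(x,t). x(n:=t)) (exps TYPE('a::finite) n \<times> A)"
proof (rule inj_onI, clarsimp)
  fix x t x' t'
  assume "x \<in> exps TYPE('a) n" "x' \<in> exps TYPE('a) n" and e: "x(n := t) = x'(n := t')"
  hence "t = t'" by (metis fun_upd_same)
  moreover have "x = x'"
  proof
    fix i show "x i = x' i"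
      using e \<open>x \<in> exps TYPE('a) n\<close> \<open>x' \<in> exps TYPE('a) n\<close> unfolding exps_def
      by (cases "i = n") (auto dest: fun_cong[where x=i])
  qed
  ultimately show "x = x' \<and> t = t'" by simp
qed

lemma finite_exps: "finite (exps TYPE('a::finite) n)"
  by (induction n) (simp_all add: exps_0 exps_Suc)

lemma card_exps: "card (exps TYPE('a::finite) n) = CARD('a) ^ n"
proof (induction n)
  case 0 thus ?case by (simp add: exps_0)
next
  case (Suc n)
  have "card (exps TYPE('a) (Suc n)) = card (exps TYPE('a) n \<times> {..<CARD('a)})"
    unfolding exps_Suc by (rule card_image[OF inj_exps_Suc])
  thus ?case using Suc by (simp add: card_cartesian_product)
qed



definition Pol :: "nat \<Rightarrow> nat \<Rightarrow> ((nat \<Rightarrow> 'a::{finite,field}) \<Rightarrow> 'a) \<Rightarrow> bool" where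
  "Pol k D g = (\<exists>L::('a \<times> (nat \<Rightarrow> nat)) list. (\<forall>ce\<in>set L. (\<Sum>i<k. snd ce i) \<le> D) \<and>
      (\<forall>x\<in>vecs k. g x = (\<Sum>ce\<leftarrow>L. fst ce * Defs.monom k (snd ce) x)))"

lemma Pol_cong: "Pol k D g \<Longrightarrow> (\<And>x. x \<in> vecs k \<Longrightarrow> g x = g' x) \<Longrightarrow> Pol k D g'"
  unfolding Pol_def by metis

lemma Pol_mono: "Pol k D g \<Longrightarrow> D \<le> D' \<Longrightarrow> Pol k D' g"
  unfolding Pol_def by (meson order_trans)

lemma Pol_monom: "Pol k (\<Sum>i<k. e i) (Defs.monom k e)"
  unfolding Pol_def by (rule exI[of _ "[(1, e)]"]) simp

lemma Pol_const: "Pol k 0 (\<lambda>_. c)"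
  unfolding Pol_def by (rule exI[of _ "[(c, \<lambda>_. 0)]"]) (simp add: Defs.monom_def)

lemma Pol_var: assumes "i < k" shows "Pol k 1 (\<lambda>x. x i)"
  unfolding Pol_def
proof (rule exI[of _ "[(1, \<lambda>j. if j = i then 1 else 0)]"], intro conjI ballI)
  fix x :: "nat \<Rightarrow> 'a"
  have "Defs.monom k (\<lambda>j. if j = i then 1 else 0) x = (\<Prod>j<k. if j = i then x j else 1)"
    unfolding Defs.monom_def by (intro prod.cong) auto
  also have "\<dots> = x i" using assms by (simp add: prod.delta)
  finally show "x i = (\<Sum>ce\<leftarrow>[(1, \<lambda>j. if j = i then 1 else 0)]. fst ce * Defs.monom k (snd ce) x)"
    by simp
qed (use assms in \<open>simp add: sum.delta\<close>)

lemma Pol_add: "Pol k D g1 \<Longrightarrow> Pol k D g2 \<Longrightarrow> Pol k D (\<lambda>x. g1 x + g2 x)"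
  unfolding Pol_def
proof (elim exE conjE)
  fix L1 L2 :: "('a \<times> (nat \<Rightarrow> nat)) list"
  assume "\<forall>ce\<in>set L1. (\<Sum>i<k. snd ce i) \<le> D" "\<forall>x\<in>vecs k. g1 x = (\<Sum>ce\<leftarrow>L1. fst ce * Defs.monom k (snd ce) x)"
     "\<forall>ce\<in>set L2. (\<Sum>i<k. snd ce i) \<le> D" "\<forall>x\<in>vecs k. g2 x = (\<Sum>ce\<leftarrow>L2. fst ce * Defs.monom k (snd ce) x)"
  thus "\<exists>L. (\<forall>ce\<in>set L. (\<Sum>i<k. snd ce i) \<le> D) \<and>
      (\<forall>x\<in>vecs k. g1 x + g2 x = (\<Sum>ce\<leftarrow>L. fst ce * Defs.monom k (snd ce) x))"
    by (intro exI[of _ "L1 @ L2"]) auto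
qed

lemma Pol_smult: "Pol k D g \<Longrightarrow> Pol k D (\<lambda>x. c * g x)"
  unfolding Pol_def
proof (elim exE conjE)
  fix L :: "('a \<times> (nat \<Rightarrow> nat)) list"
  assume "\<forall>ce\<in>set L. (\<Sum>i<k. snd ce i) \<le> D" "\<forall>x\<in>vecs k. g x = (\<Sum>ce\<leftarrow>L. fst ce * Defs.monom k (snd ce) x)"
  moreover have "\<And>x. c * (\<Sum>ce\<leftarrow>L. fst ce * Defs.monom k (snd ce) x)
      = (\<Sum>ce\<leftarrow>map (\<lambda>ce. (c * fst ce, snd ce)) L. fst ce * Defs.monom k (snd ce) x)"
    by (induction L) (auto simp: algebra_simps)
  ultimately show "\<exists>L. (\<forall>ce\<in>set L. (\<Sum>i<k. snd ce i) \<le> D) \<and>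
      (\<forall>x\<in>vecs k. c * g x = (\<Sum>ce\<leftarrow>L. fst ce * Defs.monom k (snd ce) x))"
    by (intro exI[of _ "map (\<lambda>ce. (c * fst ce, snd ce)) L"]) auto
qed

lemma monom_add: "Defs.monom k (\<lambda>i. e1 i + e2 i) x = Defs.monom k e1 x * Defs.monom k e2 x"
  unfolding Defs.monom_def by (simp add: power_add prod.distrib)

lemma sum_list_prod_lists:
  fixes f :: "'b \<Rightarrow> 'a::comm_ring_1" and g :: "'c \<Rightarrow> 'a"
  shows "(\<Sum>a\<leftarrow>L1. f a) * (\<Sum>b\<leftarrow>L2. g b) = (\<Sum>ab\<leftarrow>concat (map (\<lambda>a. map (\<lambda>b. (a, b)) L2) L1). f (fst ab) * g (snd ab))"
proof (induction L1)
  case Nil thus ?case by simp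
next
  case (Cons a L1)
  have "(\<Sum>b\<leftarrow>L2. f a * g b) = f a * (\<Sum>b\<leftarrow>L2. g b)"
    by (induction L2) (auto simp: algebra_simps)
  thus ?case using Cons by (simp add: algebra_simps comp_def)
qed

lemma Pol_mult: "Pol k D1 g1 \<Longrightarrow> Pol k D2 g2 \<Longrightarrow> Pol k (D1 + D2) (\<lambda>x. g1 x * g2 x)"
  unfolding Pol_def
proof (elim exE conjE)
  fix L1 L2 :: "('a \<times> (nat \<Rightarrow> nat)) list"
  assume d1: "\<forall>ce\<in>set L1. (\<Sum>i<k. snd ce i) \<le> D1" and r1: "\<forall>x\<in>vecs k. g1 x = (\<Sum>ce\<leftarrow>L1. fst ce * Defs.monom k (snd ce) x)"
     and d2: "\<forall>ce\<in>set L2. (\<Sum>i<k. snd ce i) \<le> D2" and r2: "\<forall>x\<in>vecs k. g2 x = (\<Sum>ce\<leftarrow>L2. fst ce * Defs.monom k (snd ce) x)"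
  define L where "L = map (\<lambda>ab. (fst (fst ab) * fst (snd ab), \<lambda>i. snd (fst ab) i + snd (snd ab) i))
      (concat (map (\<lambda>a. map (\<lambda>b. (a, b)) L2) L1))"
  have "\<forall>ce\<in>set L. (\<Sum>i<k. snd ce i) \<le> D1 + D2"
    using d1 d2 by (auto simp: L_def sum.distrib intro!: add_mono)
  moreover have "\<forall>x\<in>vecs k. g1 x * g2 x = (\<Sum>ce\<leftarrow>L. fst ce * Defs.monom k (snd ce) x)"
  proof
    fix x :: "nat \<Rightarrow> 'a" assume x: "x \<in> vecs k"
    have "g1 x * g2 x = (\<Sum>ce\<leftarrow>L1. fst ce * Defs.monom k (snd ce) x) * (\<Sum>ce\<leftarrow>L2. fst ce * Defs.monom k (snd ce) x)"
      using r1 r2 x by simp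
    also have "\<dots> = (\<Sum>ab\<leftarrow>concat (map (\<lambda>a. map (\<lambda>b. (a, b)) L2) L1).
        (fst (fst ab) * Defs.monom k (snd (fst ab)) x) * (fst (snd ab) * Defs.monom k (snd (snd ab)) x))"
      by (rule sum_list_prod_lists)
    also have "\<dots> = (\<Sum>ce\<leftarrow>L. fst ce * Defs.monom k (snd ce) x)"
      unfolding L_def by (simp add: comp_def monom_add algebra_simps)
    finally show "g1 x * g2 x = (\<Sum>ce\<leftarrow>L. fst ce * Defs.monom k (snd ce) x)" .
  qed
  ultimately show "\<exists>L. (\<forall>ce\<in>set L. (\<Sum>i<k. snd ce i) \<le> D1 + D2) \<and>
      (\<forall>x\<in>vecs k. g1 x * g2 x = (\<Sum>ce\<leftarrow>L. fst ce * Defs.monom k (snd ce) x))" by blast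
qed

lemma Pol_sum:
  assumes "finite I" "\<And>i. i \<in> I \<Longrightarrow> Pol k D (g i)"
  shows "Pol k D (\<lambda>x. \<Sum>i\<in>I. g i x)"
  using assms
proof (induction I rule: finite_induct)
  case empty thus ?case using Pol_mono[OF Pol_const[of k 0]] by simp
next
  case (insert a I)
  thus ?case by (simp add: Pol_add)
qed

lemma Pol_pow: "Pol k D g \<Longrightarrow> Pol k (m * D) (\<lambda>x. g x ^ m)"
proof (induction m)
  case 0 thus ?case using Pol_const[of k 1] by simp
next
  case (Suc m)
  thus ?case using Pol_mult[OF Suc.prems Suc.IH[OF Suc.prems]] by (simp add: add.commute)
qed

lemma Pol_prod:
  fixes n :: nat
  assumes "\<And>j. j < n \<Longrightarrow> Pol k 1 (g j)"
  shows "Pol k (\<Sum>j<n. e j) (\<lambda>x. \<Prod>j<n. g j x ^ e j)"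
  using assms
proof (induction n)
  case 0 thus ?case using Pol_const[of k 1] by simp
next
  case (Suc n)
  have "Pol k ((\<Sum>j<n. e j) + e n * 1) (\<lambda>x. (\<Prod>j<n. g j x ^ e j) * g n x ^ e n)"
    using Suc by (intro Pol_mult Pol_pow) auto
  thus ?case by simp
qed

lemma Pol_sum_zero:
  assumes "prime CARD('a::{finite,field})" "Pol k D (g :: (nat \<Rightarrow> 'a) \<Rightarrow> 'a)" "D < k * (CARD('a) - 1)"
  shows "(\<Sum>x\<in>vecs k. g x) = 0"
proof -
  obtain L :: "('a \<times> (nat \<Rightarrow> nat)) list" where L: "\<forall>ce\<in>set L. (\<Sum>i<k. snd ce i) \<le> D"
      "\<forall>x\<in>vecs k. g x = (\<Sum>ce\<leftarrow>L. fst ce * Defs.monom k (snd ce) x)"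
    using assms(2) unfolding Pol_def by blast
  have swap: "\<And>L'. (\<Sum>x\<in>vecs k. (\<Sum>ce\<leftarrow>L'. fst ce * Defs.monom k (snd ce) x))
       = (\<Sum>ce\<leftarrow>L'. fst ce * (\<Sum>x\<in>vecs k. Defs.monom k (snd ce) (x :: nat \<Rightarrow> 'a)))"
    subgoal for L' by (induction L') (simp_all add: sum.distrib sum_distrib_left)
    done
  have zero: "(\<Sum>x\<in>vecs k. Defs.monom k (snd ce) (x :: nat \<Rightarrow> 'a)) = 0" if "ce \<in> set L" for ce
  proof -
    have "\<exists>i<k. snd ce i < CARD('a) - 1"
    proof (rule ccontr)
      assume "\<not> ?thesis"
      hence "(\<Sum>i<k. CARD('a) - 1) \<le> (\<Sum>i<k. snd ce i)" by (intro sum_mono) auto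
      moreover have "(\<Sum>i<k. snd ce i) \<le> D" using L(1) that by blast
      ultimately show False using assms(3) by (simp add: mult.commute)
    qed
    then obtain i where "i < k" "psum TYPE('a) (snd ce i) = 0" using psum_zero_small[OF assms(1)] by blast
    thus ?thesis unfolding sum_monom by (metis finite_lessThan lessThan_iff prod_zero)
  qed
  have "(\<Sum>x\<in>vecs k. g x) = (\<Sum>x\<in>vecs k. (\<Sum>ce\<leftarrow>L. fst ce * Defs.monom k (snd ce) x))"
    using L(2) by simp
  also have "\<dots> = (\<Sum>ce\<leftarrow>L. fst ce * (\<Sum>x\<in>vecs k. Defs.monom k (snd ce) (x :: nat \<Rightarrow> 'a)))" by (rule swap)
  also have "\<dots> = (\<Sum>ce\<leftarrow>L. 0)" using zero by (intro arg_cong[where f=sum_list] map_cong) auto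
  finally show ?thesis by simp
qed


lemma deg_le_Pol:
  assumes "deg_le N (g :: (nat \<Rightarrow> 'a::{finite,field}) \<Rightarrow> 'a) (int D)"
  shows "Pol N D g"
proof -
  obtain c :: "(nat \<Rightarrow> nat) \<Rightarrow> 'a" where c: "\<forall>x\<in>vecs N.
      g x = (\<Sum>e\<in>{e\<in>exps TYPE('a) N. int (\<Sum>i<N. e i) \<le> int D}. c e * Defs.monom N e x)"
    using assms unfolding deg_le_def by blast
  have "Pol N D (\<lambda>x. \<Sum>e\<in>{e\<in>exps TYPE('a) N. int (\<Sum>i<N. e i) \<le> int D}. c e * Defs.monom N e x)"
  proof (rule Pol_sum)
    show "finite {e\<in>exps TYPE('a) N. int (\<Sum>i<N. e i) \<le> int D}"
      by (rule finite_subset[OF _ finite_exps]) auto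
    fix e assume "e \<in> {e\<in>exps TYPE('a) N. int (\<Sum>i<N. e i) \<le> int D}"
    hence "int (\<Sum>i<N. e i) \<le> int D" by (simp del: of_nat_sum)
    hence "(\<Sum>i<N. e i) \<le> D" by linarith
    thus "Pol N D (\<lambda>x. c e * Defs.monom N e x)"
      by (intro Pol_smult Pol_mono[OF Pol_monom])
  qed
  thus ?thesis by (rule Pol_cong) (simp add: c)
qed

lemma affine_in_vecs: "T \<in> affine_maps k n \<Longrightarrow> T x \<in> vecs n"
  unfolding affine_maps_def vecs_def by auto

lemma Pol_affine_coord:
  assumes "T \<in> affine_maps k n" "j < n"
  shows "Pol k 1 (\<lambda>x. (T x j :: 'a::{finite,field}))"
proof -
  obtain A b where T: "\<forall>x. T x = (\<lambda>i. if i < n then (\<Sum>l<k. A i l * x l) + b i else (0::'a))"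
    using assms(1) unfolding affine_maps_def by blast
  have "Pol k 1 (\<lambda>x. (\<Sum>l<k. A j l * x l) + b j)"
  proof (rule Pol_add)
    show "Pol k 1 (\<lambda>x. \<Sum>l<k. A j l * x l)"
    proof (rule Pol_sum)
      fix l assume "l \<in> {..<k}"
      thus "Pol k 1 (\<lambda>x. A j l * x l)" by (intro Pol_smult Pol_var) simp
    qed simp
    show "Pol k 1 (\<lambda>x. b j)" by (rule Pol_mono[OF Pol_const]) simp
  qed
  thus ?thesis by (rule Pol_cong) (simp add: T assms(2))
qed

lemma partA:
  assumes p: "prime CARD('a::{finite,field})"
    and f: "f \<in> RM n d" and T: "T \<in> affine_maps k n"
    and h: "deg_le k (h :: (nat \<Rightarrow> 'a) \<Rightarrow> 'a) (int ee)" and lt: "d + ee < k * (CARD('a) - 1)"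
  shows "inner_prod k (f \<circ> T) h = 0"
proof -
  have "Pol n d f" using f deg_le_Pol unfolding RM_def by blast
  then obtain L :: "('a \<times> (nat \<Rightarrow> nat)) list" where L: "\<forall>ce\<in>set L. (\<Sum>i<n. snd ce i) \<le> d"
      "\<forall>y\<in>vecs n. f y = (\<Sum>ce\<leftarrow>L. fst ce * Defs.monom n (snd ce) y)"
    unfolding Pol_def by blast
  have sl: "Pol k d (\<lambda>x. \<Sum>ce\<leftarrow>L'. fst ce * Defs.monom n (snd ce) (T x))"
    if "set L' \<subseteq> set L" for L'
    using that
  proof (induction L')
    case Nil thus ?case using Pol_mono[OF Pol_const[of k 0]] by simp
  next
    case (Cons ce L')
    have "Pol k (\<Sum>j<n. snd ce j) (\<lambda>x. \<Prod>j<n. T x j ^ snd ce j)"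
      by (rule Pol_prod) (rule Pol_affine_coord[OF T])
    moreover have "(\<Sum>j<n. snd ce j) \<le> d" using Cons.prems L(1) by auto
    ultimately have "Pol k d (\<lambda>x. \<Prod>j<n. T x j ^ snd ce j)"
      by (rule Pol_mono)
    hence "Pol k d (\<lambda>x. fst ce * Defs.monom n (snd ce) (T x))"
      unfolding Defs.monom_def by (rule Pol_smult)
    moreover have "Pol k d (\<lambda>x. \<Sum>ce\<leftarrow>L'. fst ce * Defs.monom n (snd ce) (T x))"
      using Cons by simp
    ultimately show ?case using Pol_add by fastforce
  qed
  have "Pol k d (\<lambda>x. f (T x))"
  proof (rule Pol_cong[OF sl[of L]])
    fix x :: "nat \<Rightarrow> 'a"
    have "f (T x) = (\<Sum>ce\<leftarrow>L. fst ce * Defs.monom n (snd ce) (T x))"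
      using L(2) affine_in_vecs[OF T] by blast
    thus "(\<Sum>ce\<leftarrow>L. fst ce * Defs.monom n (snd ce) (T x)) = f (T x)" by simp
  qed simp
  hence "Pol k (d + ee) (\<lambda>x. f (T x) * h x)"
    using deg_le_Pol[OF h] by (rule Pol_mult)
  hence "(\<Sum>x\<in>vecs k. f (T x) * h x) = 0" using Pol_sum_zero[OF p _ lt] by blast
  thus ?thesis by (simp add: inner_prod_def)
qed



definition Cl :: "((nat \<Rightarrow> 'a::{finite,field}) \<Rightarrow> 'a) \<Rightarrow> nat \<Rightarrow> nat \<Rightarrow> ((nat \<Rightarrow> 'a) \<Rightarrow> 'a) \<Rightarrow> bool" where
  "Cl h k N g = (\<forall>T\<in>affine_maps k N. inner_prod k (g \<circ> T) h = 0)"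

definition amap :: "nat \<Rightarrow> nat \<Rightarrow> (nat \<Rightarrow> nat \<Rightarrow> 'a::comm_ring_1) \<Rightarrow> (nat \<Rightarrow> 'a) \<Rightarrow> (nat \<Rightarrow> 'a) \<Rightarrow> (nat \<Rightarrow> 'a)" where
  "amap M N A b x = (\<lambda>i. if i < N then (\<Sum>j<M. A i j * x j) + b i else 0)"

lemma amap_affine: "amap M N A b \<in> affine_maps M N"
  unfolding affine_maps_def amap_def by blast

lemma Cl_cong:
  fixes g g' :: "(nat \<Rightarrow> 'a::{finite,field}) \<Rightarrow> 'a"
  shows "Cl h k N g \<Longrightarrow> (\<And>x. x \<in> vecs N \<Longrightarrow> g x = g' x) \<Longrightarrow> Cl h k N g'"
  unfolding Cl_def
proof (intro ballI)
  fix T :: "(nat \<Rightarrow> 'a) \<Rightarrow> nat \<Rightarrow> 'a" assume "\<forall>T\<in>affine_maps k N. inner_prod k (g \<circ> T) h = 0" "\<And>x. x \<in> vecs N \<Longrightarrow> g x = g' x"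
    "T \<in> affine_maps k N"
  moreover have "g \<circ> T = g' \<circ> T" using affine_in_vecs[OF \<open>T \<in> affine_maps k N\<close>] calculation(2) by auto
  ultimately show "inner_prod k (g' \<circ> T) h = 0" by metis
qed

lemma affine_comp:
  assumes S: "S \<in> affine_maps M N" and T: "T \<in> affine_maps k M"
  shows "S \<circ> T \<in> affine_maps k N"
proof -
  obtain A b where A: "\<forall>x. S x = (\<lambda>i. if i < N then (\<Sum>j<M. A i j * x j) + b i else (0::'a))"
    using S unfolding affine_maps_def by blast
  obtain A' b' where A': "\<forall>x. T x = (\<lambda>i. if i < M then (\<Sum>j<k. A' i j * x j) + b' i else (0::'a))"
    using T unfolding affine_maps_def by blast
  have "\<forall>x. (S \<circ> T) x = (\<lambda>i. if i < N then (\<Sum>l<k. (\<Sum>j<M. A i j * A' j l) * x l) + ((\<Sum>j<M. A i j * b' j) + b i) else 0)"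
  proof (intro allI ext)
    fix x i
    have "(\<Sum>j<M. A i j * T x j) = (\<Sum>j<M. A i j * ((\<Sum>l<k. A' j l * x l) + b' j))"
      using A' by (intro sum.cong) auto
    also have "\<dots> = (\<Sum>l<k. (\<Sum>j<M. A i j * A' j l) * x l) + (\<Sum>j<M. A i j * b' j)"
      by (simp add: algebra_simps sum.distrib sum_distrib_left sum_distrib_right sum.swap[of _ "{..<M}"])
    finally show "(S \<circ> T) x i = (if i < N then (\<Sum>l<k. (\<Sum>j<M. A i j * A' j l) * x l) + ((\<Sum>j<M. A i j * b' j) + b i) else 0)"
      using A by (simp add: add.assoc)
  qed
  thus ?thesis unfolding affine_maps_def by (intro CollectI exI)
qed

lemma Cl_comp:
  fixes g g' :: "(nat \<Rightarrow> 'a::{finite,field}) \<Rightarrow> 'a"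
  shows "Cl h k N g \<Longrightarrow> S \<in> affine_maps M N \<Longrightarrow> Cl h k M (g \<circ> S)"
  unfolding Cl_def using affine_comp by (metis comp_assoc)

lemma Cl_amap:
  fixes g g' :: "(nat \<Rightarrow> 'a::{finite,field}) \<Rightarrow> 'a"
  assumes "Cl h k N g" "\<And>x. x \<in> vecs M \<Longrightarrow> amap M N A b x = \<sigma> x"
  shows "Cl h k M (\<lambda>x. g (\<sigma> x))"
  using Cl_comp[OF assms(1) amap_affine[of M N A b]] by (rule Cl_cong) (simp add: assms(2))

lemma Cl_sum:
  fixes g :: "'i \<Rightarrow> (nat \<Rightarrow> 'a::{finite,field}) \<Rightarrow> 'a"
  assumes "finite I" "\<And>i. i \<in> I \<Longrightarrow> Cl h k N (g i)"
  shows "Cl h k N (\<lambda>x. \<Sum>i\<in>I. g i x)"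
  unfolding Cl_def
proof
  fix T :: "(nat \<Rightarrow> 'a) \<Rightarrow> nat \<Rightarrow> 'a" assume T: "T \<in> affine_maps k N"
  have "inner_prod k ((\<lambda>x. \<Sum>i\<in>I. g i x) \<circ> T) h = (\<Sum>i\<in>I. inner_prod k (g i \<circ> T) h)"
    unfolding inner_prod_def by (simp add: sum_distrib_right sum.swap[of _ I])
  also have "\<dots> = 0" using assms(2) T unfolding Cl_def by simp
  finally show "inner_prod k ((\<lambda>x. \<Sum>i\<in>I. g i x) \<circ> T) h = 0" .
qed

lemma Cl_smult:
  fixes g g' :: "(nat \<Rightarrow> 'a::{finite,field}) \<Rightarrow> 'a"
  assumes "Cl h k N g" shows "Cl h k N (\<lambda>x. c * g x)"
  unfolding Cl_def
proof
  fix T :: "(nat \<Rightarrow> 'a) \<Rightarrow> nat \<Rightarrow> 'a" assume T: "T \<in> affine_maps k N"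
  have "inner_prod k ((\<lambda>x. c * g x) \<circ> T) h = c * inner_prod k (g \<circ> T) h"
    unfolding inner_prod_def by (simp add: sum_distrib_left mult.assoc)
  thus "inner_prod k ((\<lambda>x. c * g x) \<circ> T) h = 0" using assms T unfolding Cl_def by simp
qed

lemma Cl_id:
  fixes g g' :: "(nat \<Rightarrow> 'a::{finite,field}) \<Rightarrow> 'a"
  assumes "Cl h k k g" shows "inner_prod k g h = 0"
proof -
  let ?I = "amap k k (\<lambda>i j. if i = j then 1 else 0) (\<lambda>_. 0) :: (nat \<Rightarrow> 'a) \<Rightarrow> (nat \<Rightarrow> 'a)"
  have I: "?I x = x" if "x \<in> vecs k" for x
    using that unfolding amap_def vecs_def by (auto simp: if_distrib[of "\<lambda>v. v * _"] sum.delta cong: if_cong)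
  have "inner_prod k (g \<circ> ?I) h = 0" using assms amap_affine unfolding Cl_def by blast
  moreover have "inner_prod k (g \<circ> ?I) h = inner_prod k g h"
    unfolding inner_prod_def by (intro sum.cong) (simp_all add: I)
  ultimately show ?thesis by simp
qed

lemma Fchar_Cl: "f \<in> Fchar n k h \<Longrightarrow> Cl h k n f"
  unfolding Fchar_def Cl_def by blast



definition exq :: "nat \<Rightarrow> nat \<Rightarrow> ((nat \<Rightarrow> 'a::{finite,field}) \<Rightarrow> 'a) \<Rightarrow> (nat \<Rightarrow> 'a) \<Rightarrow> 'a" where
  "exq i r g x = (\<Sum>l\<in>UNIV. omega r l * g (x(i := l * x i)))"

lemma upd_in_vecs: "x \<in> vecs N \<Longrightarrow> i < N \<Longrightarrow> x(i := v) \<in> vecs N"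
  unfolding vecs_def by auto

lemma Cl_ext:
  fixes g :: "(nat \<Rightarrow> 'a::{finite,field}) \<Rightarrow> 'a"
  assumes "Cl h k N g" "i < N"
  shows "Cl h k N (exq i r g)"
  unfolding exq_def
proof (rule Cl_sum)
  fix l :: 'a
  let ?A = "\<lambda>j m. if m = j then (if j = i then l else 1) else (0::'a)"
  have "Cl h k N (\<lambda>x. g (x(i := l * x i)))"
  proof (rule Cl_amap[OF assms(1), of N ?A "\<lambda>_. 0"])
    fix x :: "nat \<Rightarrow> 'a" assume x: "x \<in> vecs N"
    show "amap N N ?A (\<lambda>_. 0) x = x(i := l * x i)"
    proof
      fix j
      show "amap N N ?A (\<lambda>_. 0) x j = (x(i := l * x i)) j"
        using x assms(2) unfolding amap_def vecs_def
        by (auto simp: if_distrib[of "\<lambda>v. v * _"] sum.delta cong: if_cong)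
    qed
  qed
  thus "Cl h k N (\<lambda>x. omega r l * g (x(i := l * x i)))" by (rule Cl_smult)
qed simp

lemma monom_upd:
  assumes "i < N"
  shows "Defs.monom N e (x(i := l * x i)) = l ^ e i * Defs.monom N e x"
proof -
  have "Defs.monom N e (x(i := l * x i)) = (\<Prod>j<N. (if j = i then l ^ e i else 1) * x j ^ e j)"
    unfolding Defs.monom_def by (intro prod.cong) (auto simp: power_mult_distrib)
  also have "\<dots> = (\<Prod>j<N. if j = i then l ^ e i else 1) * Defs.monom N e x"
    unfolding Defs.monom_def by (rule prod.distrib)
  also have "\<dots> = l ^ e i * Defs.monom N e x" using assms by (simp add: prod.delta)
  finally show ?thesis .
qed

lemma ext_monom:
  assumes p: "prime CARD('a::{finite,field})" and "i < N" "e i \<le> CARD('a) - 1" "r \<le> CARD('a) - 1"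
  shows "exq i r (Defs.monom N e) (x :: nat \<Rightarrow> 'a) = (if e i = r then Defs.monom N e x else 0)"
proof -
  have "exq i r (Defs.monom N e) x = (\<Sum>l\<in>UNIV. omega r l * l ^ e i) * Defs.monom N e x"
    unfolding exq_def monom_upd[OF assms(2)] by (simp add: sum_distrib_right mult.assoc)
  also have "\<dots> = (if e i = r then Defs.monom N e x else 0)"
    using omega_sum[OF p assms(4,3)] by simp
  finally show ?thesis .
qed

lemma ext_lin:
  fixes g :: "'i \<Rightarrow> (nat \<Rightarrow> 'a::{finite,field}) \<Rightarrow> 'a"
  shows "exq i r (\<lambda>x. \<Sum>e\<in>E. c e * g e x) x = (\<Sum>e\<in>E. c e * exq i r (g e) x)"
  unfolding exq_def by (simp add: sum_distrib_left sum.swap[of _ E] mult.left_commute)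

lemma ext_cong:
  fixes g g' :: "(nat \<Rightarrow> 'a::{finite,field}) \<Rightarrow> 'a"
  assumes "\<And>x. x \<in> vecs N \<Longrightarrow> g x = g' x" "i < N" "x \<in> vecs N"
  shows "exq i r g x = exq i r g' x"
  unfolding exq_def using assms(1)[OF upd_in_vecs[OF assms(3,2)]] by simp

primrec extr :: "(nat \<Rightarrow> nat) \<Rightarrow> nat \<Rightarrow> ((nat \<Rightarrow> 'a::{finite,field}) \<Rightarrow> 'a) \<Rightarrow> (nat \<Rightarrow> 'a) \<Rightarrow> 'a" where
  "extr m 0 g = g"
| "extr m (Suc i) g = exq i (m i) (extr m i g)"

lemma Cl_extr:
  fixes g :: "(nat \<Rightarrow> 'a::{finite,field}) \<Rightarrow> 'a"
  shows "Cl h k N g \<Longrightarrow> i \<le> N \<Longrightarrow> Cl h k N (extr m i g)"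
proof (induction i)
  case 0 thus ?case by simp
next
  case (Suc i)
  have "Cl h k N (extr m i g)" using Suc by simp
  hence "Cl h k N (exq i (m i) (extr m i g))" using Suc.prems by (intro Cl_ext) auto
  thus ?case by simp
qed

lemma extr_cong:
  fixes g g' :: "(nat \<Rightarrow> 'a::{finite,field}) \<Rightarrow> 'a"
  assumes "\<And>x. x \<in> vecs N \<Longrightarrow> g x = g' x"
  shows "i \<le> N \<Longrightarrow> x \<in> vecs N \<Longrightarrow> extr m i g x = extr m i g' x"
proof (induction i arbitrary: x)
  case 0 thus ?case using assms by simp
next
  case (Suc i)
  have "extr m (Suc i) g x = exq i (m i) (extr m i g) x" by simp
  also have "\<dots> = exq i (m i) (extr m i g') x"
    by (rule ext_cong[where N=N]) (use Suc in auto)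
  finally show ?case by simp
qed

lemma extr_rep:
  assumes p: "prime CARD('a::{finite,field})" and m: "m \<in> exps TYPE('a) N"
    and E: "E \<subseteq> exps TYPE('a) N"
  shows "i \<le> N \<Longrightarrow> x \<in> vecs N \<Longrightarrow>
    extr m i (\<lambda>x. \<Sum>e\<in>E. c e * Defs.monom N e x) (x :: nat \<Rightarrow> 'a)
      = (\<Sum>e\<in>{e\<in>E. \<forall>j<i. e j = m j}. c e * Defs.monom N e x)"
proof (induction i arbitrary: x)
  case 0 thus ?case by simp
next
  case (Suc i)
  have "extr m (Suc i) (\<lambda>x. \<Sum>e\<in>E. c e * Defs.monom N e x) x
      = exq i (m i) (\<lambda>x. \<Sum>e\<in>{e\<in>E. \<forall>j<i. e j = m j}. c e * Defs.monom N e x) x"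
  proof -
    have "extr m (Suc i) (\<lambda>x. \<Sum>e\<in>E. c e * Defs.monom N e x) x
        = exq i (m i) (extr m i (\<lambda>x. \<Sum>e\<in>E. c e * Defs.monom N e x)) x" by simp
    also have "\<dots> = exq i (m i) (\<lambda>x. \<Sum>e\<in>{e\<in>E. \<forall>j<i. e j = m j}. c e * Defs.monom N e x) x"
      by (rule ext_cong[where N=N]) (use Suc in auto)
    finally show ?thesis .
  qed
  also have "\<dots> = (\<Sum>e\<in>{e\<in>E. \<forall>j<i. e j = m j}. c e * exq i (m i) (Defs.monom N e) x)"
    by (rule ext_lin)
  also have "\<dots> = (\<Sum>e\<in>{e\<in>E. \<forall>j<i. e j = m j}. if e i = m i then c e * Defs.monom N e x else 0)"
  proof (intro sum.cong refl)
    fix e assume "e \<in> {e\<in>E. \<forall>j<i. e j = m j}"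
    hence "e i < CARD('a)" "m i < CARD('a)" using E m Suc.prems unfolding exps_def by auto
    thus "c e * exq i (m i) (Defs.monom N e) x = (if e i = m i then c e * Defs.monom N e x else 0)"
      using ext_monom[OF p, of i N e "m i" x] Suc.prems by simp
  qed
  also have "\<dots> = (\<Sum>e\<in>{e\<in>E. \<forall>j<Suc i. e j = m j}. c e * Defs.monom N e x)"
  proof -
    have fin: "finite {e\<in>E. \<forall>j<i. e j = m j}"
      using finite_subset[OF E finite_exps] by simp
    have "{e\<in>E. \<forall>j<Suc i. e j = m j} = {e\<in>{e\<in>E. \<forall>j<i. e j = m j}. e i = m i}"
      by (auto simp: less_Suc_eq)
    thus ?thesis using sum.inter_filter[OF fin, of "\<lambda>e. c e * Defs.monom N e x" "\<lambda>e. e i = m i"] by simp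
  qed
  finally show ?case .
qed

lemma extr_full:
  assumes p: "prime CARD('a::{finite,field})" and m: "m \<in> exps TYPE('a) N"
    and x: "x \<in> vecs N"
  shows "extr m N (\<lambda>x. \<Sum>e\<in>exps TYPE('a) N. c e * Defs.monom N e x) (x :: nat \<Rightarrow> 'a)
      = c m * Defs.monom N m x"
proof -
  have "{e\<in>exps TYPE('a) N. \<forall>j<N. e j = m j} = {m}"
  proof (intro set_eqI iffI)
    fix e assume "e \<in> {e\<in>exps TYPE('a) N. \<forall>j<N. e j = m j}"
    thus "e \<in> {m}" using m unfolding exps_def by (auto intro!: ext) (metis not_le)
  qed (use m in auto)
  thus ?thesis using extr_rep[OF p m order_refl order_refl x] by simp
qed


lemma interp:
  assumes p: "prime CARD('a::{finite,field})"
  shows "\<exists>c. \<forall>x\<in>vecs N. (f :: (nat \<Rightarrow> 'a) \<Rightarrow> 'a) x = (\<Sum>e\<in>exps TYPE('a) N. c e * Defs.monom N e x)"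
proof -
  define Co where "Co = PiE (exps TYPE('a) N) (\<lambda>_. UNIV :: 'a set)"
  define Fu where "Fu = PiE (vecs N :: (nat \<Rightarrow> 'a) set) (\<lambda>_. UNIV :: 'a set)"
  define \<Phi> :: "((nat \<Rightarrow> nat) \<Rightarrow> 'a) \<Rightarrow> (nat \<Rightarrow> 'a) \<Rightarrow> 'a" where "\<Phi> c = restrict (\<lambda>x. \<Sum>e\<in>exps TYPE('a) N. c e * Defs.monom N e x) (vecs N)" for c
  have inj: "inj_on \<Phi> Co"
  proof (rule inj_onI)
    fix c c' assume c: "c \<in> Co" "c' \<in> Co" "\<Phi> c = \<Phi> c'"
    show "c = c'"
    proof (rule extensionalityI[where A="exps TYPE('a) N"])
      show "c \<in> extensional (exps TYPE('a) N)" "c' \<in> extensional (exps TYPE('a) N)"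
        using c(1,2) unfolding Co_def by (simp_all add: PiE_iff)
      fix m assume m: "m \<in> exps TYPE('a) N"
      define one where "one = (\<lambda>i. if i < N then 1 else (0::'a))"
      have one: "one \<in> vecs N" by (simp add: vecs_def one_def)
      have m1: "Defs.monom N m one = 1" by (simp add: Defs.monom_def one_def)
      have eq0: "(\<Sum>e\<in>exps TYPE('a) N. (c e - c' e) * Defs.monom N e x) = (\<Sum>e\<in>exps TYPE('a) N. 0 * Defs.monom N e x)"
        if x: "x \<in> vecs N" for x
      proof -
        have "\<Phi> c x = \<Phi> c' x" using c(3) by simp
        hence "(\<Sum>e\<in>exps TYPE('a) N. c e * Defs.monom N e x) = (\<Sum>e\<in>exps TYPE('a) N. c' e * Defs.monom N e x)"
          using x by (simp add: \<Phi>_def)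
        thus ?thesis by (simp add: left_diff_distrib sum_subtractf)
      qed
      have "c m - c' m = extr m N (\<lambda>x. \<Sum>e\<in>exps TYPE('a) N. (c e - c' e) * Defs.monom N e x) one"
        using extr_full[OF p m one, of "\<lambda>e. c e - c' e"] m1 by simp
      also have "\<dots> = extr m N (\<lambda>x. \<Sum>e\<in>exps TYPE('a) N. 0 * Defs.monom N e x) one"
        using extr_cong[OF eq0 order_refl one] by simp
      also have "\<dots> = 0" using extr_full[OF p m one, of "\<lambda>e. 0"] by simp
      finally show "c m = c' m" by simp
    qed
  qed
  have finFu: "finite Fu" unfolding Fu_def by (intro finite_PiE finite_vecs) simp
  have sub: "\<Phi> ` Co \<subseteq> Fu" unfolding \<Phi>_def Fu_def by auto
  have "card Co = CARD('a) ^ card (exps TYPE('a) N)"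
    by (simp add: Co_def card_PiE finite_exps)
  moreover have "card Fu = CARD('a) ^ card (vecs N :: (nat \<Rightarrow> 'a) set)"
    by (simp add: Fu_def card_PiE finite_vecs)
  ultimately have "card (\<Phi> ` Co) = card Fu"
    using card_image[OF inj] by (simp add: card_exps card_vecs)
  hence im: "\<Phi> ` Co = Fu" using card_subset_eq[OF finFu sub] by simp
  have "restrict f (vecs N) \<in> Fu" by (simp add: Fu_def)
  then obtain c where c: "\<Phi> c = restrict f (vecs N)" using im by (metis imageE)
  show ?thesis
  proof (intro exI ballI)
    fix x :: "nat \<Rightarrow> 'a" assume x: "x \<in> vecs N"
    have "f x = restrict f (vecs N) x" using x by simp
    also have "\<dots> = (\<Sum>e\<in>exps TYPE('a) N. c e * Defs.monom N e x)"
      unfolding c[symmetric] \<Phi>_def using x by simp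
    finally show "f x = (\<Sum>e\<in>exps TYPE('a) N. c e * Defs.monom N e x)" .
  qed
qed

lemma not_deg_le_coef:
  assumes p: "prime CARD('a::{finite,field})" and nd: "\<not> deg_le N (f :: (nat \<Rightarrow> 'a) \<Rightarrow> 'a) (int d)"
  shows "\<exists>c m. (\<forall>x\<in>vecs N. f x = (\<Sum>e\<in>exps TYPE('a) N. c e * Defs.monom N e x)) \<and>
     m \<in> exps TYPE('a) N \<and> d < (\<Sum>i<N. m i) \<and> c m \<noteq> 0"
proof -
  obtain c where c: "\<forall>x\<in>vecs N. f x = (\<Sum>e\<in>exps TYPE('a) N. c e * Defs.monom N e x)"
    using interp[OF p] by blast
  show ?thesis
  proof (rule ccontr)
    assume "\<not> ?thesis"
    hence z: "\<And>m. m \<in> exps TYPE('a) N \<Longrightarrow> d < (\<Sum>i<N. m i) \<Longrightarrow> c m = 0" using c by blast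
    have "\<forall>x\<in>vecs N. f x = (\<Sum>e\<in>{e\<in>exps TYPE('a) N. int (\<Sum>i<N. e i) \<le> int d}. c e * Defs.monom N e x)"
    proof
      fix x :: "nat \<Rightarrow> 'a" assume x: "x \<in> vecs N"
      have "(\<Sum>e\<in>{e\<in>exps TYPE('a) N. int (\<Sum>i<N. e i) \<le> int d}. c e * Defs.monom N e x)
          = (\<Sum>e\<in>exps TYPE('a) N. c e * Defs.monom N e x)"
      proof (rule sum.mono_neutral_left[OF finite_exps])
        show "{e\<in>exps TYPE('a) N. int (\<Sum>i<N. e i) \<le> int d} \<subseteq> exps TYPE('a) N" by auto
        show "\<forall>e\<in>exps TYPE('a) N - {e\<in>exps TYPE('a) N. int (\<Sum>i<N. e i) \<le> int d}. c e * Defs.monom N e x = 0"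
        proof
          fix e assume e: "e \<in> exps TYPE('a) N - {e\<in>exps TYPE('a) N. int (\<Sum>i<N. e i) \<le> int d}"
          hence "\<not> int (\<Sum>i<N. e i) \<le> int d" by blast
          hence "d < (\<Sum>i<N. e i)" by linarith
          thus "c e * Defs.monom N e x = 0" using z e by simp
        qed
      qed
      thus "f x = (\<Sum>e\<in>{e\<in>exps TYPE('a) N. int (\<Sum>i<N. e i) \<le> int d}. c e * Defs.monom N e x)"
        using c x by simp
    qed
    hence "deg_le N f (int d)" unfolding deg_le_def by blast
    thus False using nd by simp
  qed
qed

lemma Cl_monom:
  assumes p: "prime CARD('a::{finite,field})" and f: "Cl h k N (f :: (nat \<Rightarrow> 'a) \<Rightarrow> 'a)"
    and c: "\<forall>x\<in>vecs N. f x = (\<Sum>e\<in>exps TYPE('a) N. c e * Defs.monom N e x)"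
    and m: "m \<in> exps TYPE('a) N" "c m \<noteq> 0"
  shows "Cl h k N (Defs.monom N m)"
proof -
  have "Cl h k N (\<lambda>x. \<Sum>e\<in>exps TYPE('a) N. c e * Defs.monom N e x)"
    using f by (rule Cl_cong) (simp add: c)
  hence "Cl h k N (extr m N (\<lambda>x. \<Sum>e\<in>exps TYPE('a) N. c e * Defs.monom N e x))"
    by (rule Cl_extr) simp
  hence "Cl h k N (\<lambda>x. c m * Defs.monom N m x)"
    by (rule Cl_cong) (simp add: extr_full[OF p m(1)])
  hence "Cl h k N (\<lambda>x. inverse (c m) * (c m * Defs.monom N m x))" by (rule Cl_smult)
  thus ?thesis by (rule Cl_cong) (simp add: m(2))
qed



lemma split_sum:
  assumes p: "prime CARD('a::{finite,field})" and t: "1 \<le> t" "t \<le> CARD('a) - 1"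
  shows "(\<Sum>l\<in>UNIV. omega 1 l * (u + l * v) ^ t) = of_nat t * u ^ (t - 1) * (v :: 'a)"
proof -
  have p2: "CARD('a) \<ge> 2" using prime_ge_2_nat[OF p] .
  have "(\<Sum>l\<in>UNIV. omega 1 l * (u + l * v) ^ t)
      = (\<Sum>l\<in>UNIV. omega 1 l * (\<Sum>s\<le>t. of_nat (t choose s) * (l * v) ^ s * u ^ (t - s)))"
    by (intro sum.cong refl) (simp only: add.commute[of u] binomial_ring)
  also have "\<dots> = (\<Sum>s\<le>t. of_nat (t choose s) * v ^ s * u ^ (t - s) * (\<Sum>l\<in>UNIV. omega 1 l * l ^ s))"
    by (simp add: sum_distrib_left sum_distrib_right sum.swap[of _ "{..t}"] power_mult_distrib mult_ac)
  also have "\<dots> = (\<Sum>s\<le>t. if s = 1 then of_nat (t choose s) * v ^ s * u ^ (t - s) else 0)"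
  proof (intro sum.cong refl)
    fix s assume "s \<in> {..t}"
    hence "s \<le> CARD('a) - 1" using t by simp
    thus "of_nat (t choose s) * v ^ s * u ^ (t - s) * (\<Sum>l\<in>UNIV. omega 1 l * l ^ s)
        = (if s = 1 then of_nat (t choose s) * v ^ s * u ^ (t - s) else 0)"
      using omega_sum[OF p, of 1 s] p2 by auto
  qed
  also have "\<dots> = of_nat t * u ^ (t - 1) * v" using t by (simp add: sum.delta)
  finally show ?thesis .
qed

lemma prod_upd_remove:
  fixes f :: "nat \<Rightarrow> 'a::comm_monoid_mult"
  assumes "j < N"
  shows "(\<Prod>i<N. f i) = f j * (\<Prod>i\<in>{..<N} - {j}. f i)"
  using assms by (simp add: prod.remove)

lemma Cl_split:
  assumes p: "prime CARD('a::{finite,field})" and cl: "Cl h k N (Defs.monom N m :: (nat \<Rightarrow> 'a) \<Rightarrow> 'a)"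
    and j: "j < N" and mj: "1 \<le> m j" "m j \<le> CARD('a) - 1"
  shows "Cl h k (Suc N) (Defs.monom (Suc N) (m(j := m j - 1, N := 1)) :: (nat \<Rightarrow> 'a) \<Rightarrow> 'a)"
proof -
  let ?S = "\<lambda>(l::'a) (x :: nat \<Rightarrow> 'a) i. if i < N then x i + (if i = j then l * x N else 0) else 0"
  have cl1: "Cl h k (Suc N) (\<lambda>x. Defs.monom N m (?S l x))" for l
  proof (rule Cl_amap[OF cl, of "Suc N" "\<lambda>i q. (if q = i then 1 else 0) + (if i = j \<and> q = N then l else 0)" "\<lambda>_. 0"])
    fix x :: "nat \<Rightarrow> 'a" assume x: "x \<in> vecs (Suc N)"
    show "amap (Suc N) N (\<lambda>i q. (if q = i then 1 else 0) + (if i = j \<and> q = N then l else 0)) (\<lambda>_. 0) x = ?S l x"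
    proof
      fix i
      show "amap (Suc N) N (\<lambda>i q. (if q = i then 1 else 0) + (if i = j \<and> q = N then l else 0)) (\<lambda>_. 0) x i = ?S l x i"
        unfolding amap_def
        by (auto simp: distrib_right sum.distrib if_distrib[of "\<lambda>v. v * _"] sum.delta cong: if_cong)
    qed
  qed
  have "Cl h k (Suc N) (\<lambda>x. \<Sum>l\<in>UNIV. omega 1 l * Defs.monom N m (?S l x))"
    by (rule Cl_sum) (auto intro: Cl_smult[OF cl1])
  hence cl2: "Cl h k (Suc N) (\<lambda>x. of_nat (m j) * Defs.monom (Suc N) (m(j := m j - 1, N := 1)) x)"
  proof (rule Cl_cong)
    fix x :: "nat \<Rightarrow> 'a" assume x: "x \<in> vecs (Suc N)"
    define R where "R = (\<Prod>i\<in>{..<N} - {j}. x i ^ m i)"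
    have "Defs.monom N m (?S l x) = (x j + l * x N) ^ m j * R" for l
    proof -
      have "Defs.monom N m (?S l x) = (?S l x j) ^ m j * (\<Prod>i\<in>{..<N} - {j}. (?S l x i) ^ m i)"
        unfolding Defs.monom_def by (rule prod_upd_remove[OF j])
      also have "(\<Prod>i\<in>{..<N} - {j}. (?S l x i) ^ m i) = R"
        unfolding R_def by (intro prod.cong) auto
      finally show ?thesis using j by simp
    qed
    hence "(\<Sum>l\<in>UNIV. omega 1 l * Defs.monom N m (?S l x)) = (\<Sum>l\<in>UNIV. omega 1 l * (x j + l * x N) ^ m j) * R"
      by (simp add: sum_distrib_right mult.assoc)
    also have "\<dots> = of_nat (m j) * x j ^ (m j - 1) * x N * R"
      using split_sum[OF p mj] by simp
    also have "\<dots> = of_nat (m j) * Defs.monom (Suc N) (m(j := m j - 1, N := 1)) x"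
    proof -
      have "Defs.monom (Suc N) (m(j := m j - 1, N := 1)) x
          = x N * (\<Prod>i<N. x i ^ (m(j := m j - 1)) i)"
        unfolding Defs.monom_def by (simp add: prod.lessThan_Suc mult.commute)
      also have "(\<Prod>i<N. x i ^ (m(j := m j - 1)) i) = x j ^ (m j - 1) * (\<Prod>i\<in>{..<N} - {j}. x i ^ (m(j := m j - 1)) i)"
        using prod_upd_remove[OF j, of "\<lambda>i. x i ^ (m(j := m j - 1)) i"] by simp
      also have "(\<Prod>i\<in>{..<N} - {j}. x i ^ (m(j := m j - 1)) i) = R"
        unfolding R_def by (intro prod.cong) auto
      finally have E: "Defs.monom (Suc N) (m(j := m j - 1, N := 1)) x = x N * (x j ^ (m j - 1) * R)" .
      show ?thesis unfolding E by (simp only: mult_ac)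
    qed
    finally show "(\<Sum>l\<in>UNIV. omega 1 l * Defs.monom N m (?S l x)) = of_nat (m j) * Defs.monom (Suc N) (m(j := m j - 1, N := 1)) x" .
  qed
  have nz: "of_nat (m j) \<noteq> (0::'a)" using of_nat_nonzero[OF p] mj prime_ge_2_nat[OF p] by auto
  have "Cl h k (Suc N) (\<lambda>x. inverse (of_nat (m j)) * (of_nat (m j) * Defs.monom (Suc N) (m(j := m j - 1, N := 1)) x))"
    using cl2 by (rule Cl_smult)
  thus ?thesis by (rule Cl_cong) (simp add: nz)
qed


lemma sum_upd_nat:
  fixes f :: "nat \<Rightarrow> nat"
  assumes "j < N"
  shows "(\<Sum>i<N. (f(j := v)) i) + f j = (\<Sum>i<N. f i) + v"
proof -
  have "(\<Sum>i<N. (f(j := v)) i) = v + (\<Sum>i\<in>{..<N} - {j}. (f(j := v)) i)"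
    using assms by (simp add: sum.remove)
  moreover have "(\<Sum>i<N. f i) = f j + (\<Sum>i\<in>{..<N} - {j}. f i)"
    using assms by (simp add: sum.remove)
  moreover have "(\<Sum>i\<in>{..<N} - {j}. (f(j := v)) i) = (\<Sum>i\<in>{..<N} - {j}. f i)"
    by (intro sum.cong) auto
  ultimately show ?thesis by simp
qed

lemma Cl_unit:
  assumes p: "prime CARD('a::{finite,field})"
  shows "Cl h k N (Defs.monom N m :: (nat \<Rightarrow> 'a) \<Rightarrow> 'a) \<Longrightarrow> (\<forall>i<N. m i \<le> CARD('a) - 1) \<Longrightarrow>
    \<exists>N' u. Cl h k N' (Defs.monom N' u :: (nat \<Rightarrow> 'a) \<Rightarrow> 'a) \<and> (\<forall>i<N'. u i \<le> 1) \<and> (\<Sum>i<N'. u i) = (\<Sum>i<N. m i)"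
proof (induction "\<Sum>i<N. m i - 1" arbitrary: N m rule: less_induct)
  case less
  show ?case
  proof (cases "\<forall>i<N. m i \<le> 1")
    case True thus ?thesis using less.prems by blast
  next
    case False
    then obtain j where j: "j < N" "m j \<ge> 2" by (auto simp: not_le)
    define m' where "m' = m(j := m j - 1, N := 1)"
    have cl': "Cl h k (Suc N) (Defs.monom (Suc N) m' :: (nat \<Rightarrow> 'a) \<Rightarrow> 'a)"
      unfolding m'_def using Cl_split[OF p less.prems(1) j(1)] j less.prems(2) by simp
    have p2: "CARD('a) \<ge> 2" using prime_ge_2_nat[OF p] .
    have bnd: "\<forall>i<Suc N. m' i \<le> CARD('a) - 1" using less.prems(2) p2 j(1) by (auto simp: m'_def)
    have low: "\<And>i. i < N \<Longrightarrow> m' i = (m(j := m j - 1)) i" by (simp add: m'_def)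
    have s1: "(\<Sum>i<Suc N. m' i - 1) = (\<Sum>i<N. (m(j := m j - 1)) i - 1)"
      by (simp add: m'_def)
    also have "\<dots> = (\<Sum>i<N. ((\<lambda>i. m i - 1)(j := m j - 2)) i)"
      by (intro sum.cong) auto
    finally have s1': "(\<Sum>i<Suc N. m' i - 1) + (m j - 1) = (\<Sum>i<N. m i - 1) + (m j - 2)"
      using sum_upd_nat[OF j(1), of "\<lambda>i. m i - 1" "m j - 2"] by simp
    hence lt: "(\<Sum>i<Suc N. m' i - 1) < (\<Sum>i<N. m i - 1)" using j(2) by simp
    have s2: "(\<Sum>i<Suc N. m' i) = (\<Sum>i<N. (m(j := m j - 1)) i) + 1"
      by (simp add: m'_def)
    hence "(\<Sum>i<Suc N. m' i) + m j = (\<Sum>i<N. m i) + (m j - 1) + 1"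
      using sum_upd_nat[OF j(1), of m "m j - 1"] by simp
    hence s2': "(\<Sum>i<Suc N. m' i) = (\<Sum>i<N. m i)" using j(2) by simp
    obtain N' u where "Cl h k N' (Defs.monom N' u :: (nat \<Rightarrow> 'a) \<Rightarrow> 'a)" "\<forall>i<N'. u i \<le> 1"
        "(\<Sum>i<N'. u i) = (\<Sum>i<Suc N. m' i)"
      using less.hyps[OF lt cl' bnd] by blast
    thus ?thesis using s2' by auto
  qed
qed


lemma assign:
  fixes Os :: "nat set" and b :: "nat \<Rightarrow> nat"
  assumes "finite Os"
  shows "(\<Sum>i<K. b i) \<le> card Os \<Longrightarrow> \<exists>Os' \<psi>. Os' \<subseteq> Os \<and> (\<forall>l\<in>Os'. \<psi> l < K) \<and>
     (\<forall>i<K. card {l\<in>Os'. \<psi> l = i} = b i) \<and> card Os' = (\<Sum>i<K. b i)"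
proof (induction K)
  case 0 thus ?case by (intro exI[of _ "{}"]) simp
next
  case (Suc K)
  then obtain O1 \<psi>1 where O1: "O1 \<subseteq> Os" "\<forall>l\<in>O1. \<psi>1 l < K" "\<forall>i<K. card {l\<in>O1. \<psi>1 l = i} = b i"
      "card O1 = (\<Sum>i<K. b i)" by auto
  have fO1: "finite O1" using O1(1) assms finite_subset by blast
  have "card (Os - O1) = card Os - card O1" using O1(1) fO1 by (simp add: card_Diff_subset)
  hence "b K \<le> card (Os - O1)" using Suc.prems O1(4) by simp
  then obtain B where B: "B \<subseteq> Os - O1" "card B = b K" "finite B" by (rule obtain_subset_with_card_n)
  define \<psi> where "\<psi> l = (if l \<in> B then K else \<psi>1 l)" for l
  show ?case
  proof (intro exI[of _ "O1 \<union> B"] exI[of _ \<psi>] conjI allI impI ballI)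
    show "O1 \<union> B \<subseteq> Os" using O1(1) B(1) by auto
    show "\<psi> l < Suc K" if "l \<in> O1 \<union> B" for l using that O1(2) by (auto simp: \<psi>_def)
    show "card {l \<in> O1 \<union> B. \<psi> l = i} = b i" if "i < Suc K" for i
    proof (cases "i = K")
      case True
      have "{l \<in> O1 \<union> B. \<psi> l = i} = B" using True O1(2) B(1) by (auto simp: \<psi>_def)
      thus ?thesis using B(2) True by simp
    next
      case False
      hence "{l \<in> O1 \<union> B. \<psi> l = i} = {l \<in> O1. \<psi>1 l = i}" using B(1) by (auto simp: \<psi>_def)
      thus ?thesis using O1(3) False that by simp
    qed
    have "O1 \<inter> B = {}" using B(1) by auto
    thus "card (O1 \<union> B) = (\<Sum>i<Suc K. b i)" using card_Un_disjoint[OF fO1 B(3)] O1(4) B(2) by simp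
  qed
qed

lemma Cl_merge:
  assumes cl: "Cl h k N (Defs.monom N u :: (nat \<Rightarrow> 'a::{finite,field}) \<Rightarrow> 'a)"
    and u: "\<forall>i<N. u i \<le> 1" and sb: "(\<Sum>i<K. b i) \<le> (\<Sum>i<N. u i)"
  shows "Cl h k K (Defs.monom K b :: (nat \<Rightarrow> 'a) \<Rightarrow> 'a)"
proof -
  define Os where "Os = {i. i < N \<and> u i = 1}"
  have fO: "finite Os" unfolding Os_def by (rule finite_subset[of _ "{..<N}"]) auto
  have "(\<Sum>i<N. u i) = (\<Sum>i\<in>Os. u i)"
    by (rule sum.mono_neutral_right) (use u in \<open>auto simp: Os_def\<close>)
  also have "\<dots> = (\<Sum>i\<in>Os. 1)" by (intro sum.cong) (auto simp: Os_def)
  also have "\<dots> = card Os" by simp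
  finally have "(\<Sum>i<K. b i) \<le> card Os" using sb by simp
  from assign[OF fO this] obtain P \<psi> where P: "P \<subseteq> Os" "\<forall>l\<in>P. \<psi> l < K" "\<forall>i<K. card {l\<in>P. \<psi> l = i} = b i"
    by (elim exE conjE)
  have fP: "finite P" using P(1) fO finite_subset by blast
  let ?A = "\<lambda>l i. if l \<in> P \<and> \<psi> l = i then 1 else (0::'a)"
  let ?c = "\<lambda>l. if l \<in> P then 0 else (1::'a)"
  let ?M = "\<lambda>(y :: nat \<Rightarrow> 'a) l. if l < N then (if l \<in> P then y (\<psi> l) else 1) else 0"
  have "Cl h k K (\<lambda>y. Defs.monom N u (?M y))"
  proof (rule Cl_amap[OF cl, of K ?A ?c])
    fix y :: "nat \<Rightarrow> 'a" assume y: "y \<in> vecs K"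
    show "amap K N ?A ?c y = ?M y"
    proof
      fix l
      show "amap K N ?A ?c y l = ?M y l"
      proof (cases "l \<in> P")
        case True
        have "(\<Sum>i<K. ?A l i * y i) = (\<Sum>i<K. if \<psi> l = i then y i else 0)"
          using True by (intro sum.cong) auto
        also have "\<dots> = y (\<psi> l)" using P(2) True by (simp add: sum.delta)
        finally show ?thesis using True unfolding amap_def by simp
      next
        case False
        have "(\<Sum>i<K. ?A l i * y i) = 0" using False by simp
        thus ?thesis using False unfolding amap_def by simp
      qed
    qed
  qed
  thus ?thesis
  proof (rule Cl_cong)
    fix y :: "nat \<Rightarrow> 'a" assume y: "y \<in> vecs K"
    have "Defs.monom N u (?M y) = (\<Prod>l<N. if l \<in> P then y (\<psi> l) else 1)"
      unfolding Defs.monom_def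
    proof (intro prod.cong refl)
      fix l assume "l \<in> {..<N}"
      thus "?M y l ^ u l = (if l \<in> P then y (\<psi> l) else 1)"
        using P(1) by (auto simp: Os_def)
    qed
    also have "\<dots> = (\<Prod>l\<in>P. y (\<psi> l))"
      by (rule prod.mono_neutral_cong_right) (use P(1) in \<open>auto simp: Os_def\<close>)
    also have "\<dots> = (\<Prod>i<K. \<Prod>l\<in>{l\<in>P. \<psi> l = i}. y (\<psi> l))"
      using P(2) fP by (intro prod.group[symmetric]) auto
    also have "\<dots> = (\<Prod>i<K. y i ^ b i)"
    proof (intro prod.cong refl)
      fix i assume i: "i \<in> {..<K}"
      have "(\<Prod>l\<in>{l\<in>P. \<psi> l = i}. y (\<psi> l)) = (\<Prod>l\<in>{l\<in>P. \<psi> l = i}. y i)"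
        by (intro prod.cong) auto
      also have "\<dots> = y i ^ b i" using P(3) i by simp
      finally show "(\<Prod>l\<in>{l\<in>P. \<psi> l = i}. y (\<psi> l)) = y i ^ b i" .
    qed
    finally show "Defs.monom N u (?M y) = Defs.monom K b y" by (simp add: Defs.monom_def)
  qed
qed



lemma pair_nonzero:
  assumes p: "prime CARD('a::{finite,field})"
    and h1: "deg_le k (h :: (nat \<Rightarrow> 'a) \<Rightarrow> 'a) (int ee)" and h2: "\<not> deg_le k h (int ee - 1)"
  shows "\<exists>b. (\<Sum>i<k. b i) + ee = k * (CARD('a) - 1) \<and> inner_prod k (Defs.monom k b) h \<noteq> 0"
proof -
  let ?q = "CARD('a) - 1"
  have q1: "?q \<ge> 1" using prime_ge_2_nat[OF p] by simp
  define E where "E = {e\<in>exps TYPE('a) k. int (\<Sum>i<k. e i) \<le> int ee}"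
  obtain c :: "(nat \<Rightarrow> nat) \<Rightarrow> 'a" where c: "\<forall>x\<in>vecs k. h x = (\<Sum>e\<in>E. c e * Defs.monom k e x)"
    using h1 unfolding deg_le_def E_def by blast
  have finE: "finite E" unfolding E_def by (rule finite_subset[OF _ finite_exps]) auto
  obtain a where a: "a \<in> E" "(\<Sum>i<k. a i) = ee" "c a \<noteq> 0"
  proof (rule ccontr)
    assume "\<not> thesis"
    hence z: "\<And>a. a \<in> E \<Longrightarrow> (\<Sum>i<k. a i) = ee \<Longrightarrow> c a = 0" using that by blast
    have "\<forall>x\<in>vecs k. h x = (\<Sum>e\<in>{e\<in>exps TYPE('a) k. int (\<Sum>i<k. e i) \<le> int ee - 1}. c e * Defs.monom k e x)"
    proof
      fix x :: "nat \<Rightarrow> 'a" assume x: "x \<in> vecs k"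
      have "(\<Sum>e\<in>{e\<in>exps TYPE('a) k. int (\<Sum>i<k. e i) \<le> int ee - 1}. c e * Defs.monom k e x)
          = (\<Sum>e\<in>E. c e * Defs.monom k e x)"
      proof (rule sum.mono_neutral_left[OF finE])
        show "{e\<in>exps TYPE('a) k. int (\<Sum>i<k. e i) \<le> int ee - 1} \<subseteq> E" by (auto simp: E_def)
        show "\<forall>e\<in>E - {e\<in>exps TYPE('a) k. int (\<Sum>i<k. e i) \<le> int ee - 1}. c e * Defs.monom k e x = 0"
        proof
          fix e assume e: "e \<in> E - {e\<in>exps TYPE('a) k. int (\<Sum>i<k. e i) \<le> int ee - 1}"
          hence "int (\<Sum>i<k. e i) \<le> int ee" "\<not> int (\<Sum>i<k. e i) \<le> int ee - 1"
            by (auto simp: E_def simp del: of_nat_sum)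
          hence "(\<Sum>i<k. e i) = ee" by linarith
          thus "c e * Defs.monom k e x = 0" using z e by simp
        qed
      qed
      thus "h x = (\<Sum>e\<in>{e\<in>exps TYPE('a) k. int (\<Sum>i<k. e i) \<le> int ee - 1}. c e * Defs.monom k e x)"
        using c x by simp
    qed
    hence "deg_le k h (int ee - 1)" unfolding deg_le_def by blast
    thus False using h2 by simp
  qed
  have aE: "a \<in> exps TYPE('a) k" using a(1) by (simp add: E_def)
  hence ab: "\<And>i. i < k \<Longrightarrow> a i \<le> ?q" by (auto simp: exps_def less_Suc_eq_le)
  define b where "b i = ?q - a i" for i
  have sb: "(\<Sum>i<k. b i) + ee = k * ?q"
  proof -
    have "(\<Sum>i<k. b i) + (\<Sum>i<k. a i) = (\<Sum>i<k. b i + a i)" by (simp add: sum.distrib)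
    also have "\<dots> = (\<Sum>i<k. ?q)"
    proof (intro sum.cong refl)
      fix i assume "i \<in> {..<k}"
      hence "a i \<le> ?q" using ab by simp
      thus "b i + a i = ?q" unfolding b_def by linarith
    qed
    finally show ?thesis using a(2) by simp
  qed
  have trm: "(\<Sum>x\<in>vecs k. Defs.monom k b x * Defs.monom k e x) = (if e = a then (-1) ^ k else (0::'a))"
    if e: "e \<in> E" for e
  proof -
    have "(\<Sum>x\<in>vecs k. Defs.monom k b x * Defs.monom k e (x :: nat \<Rightarrow> 'a)) = (\<Sum>x\<in>vecs k. Defs.monom k (\<lambda>i. b i + e i) (x :: nat \<Rightarrow> 'a))"
      by (simp add: monom_add)
    also have "\<dots> = (\<Prod>i<k. psum TYPE('a) (b i + e i))" by (rule sum_monom)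
    also have "\<dots> = (if e = a then (-1) ^ k else 0)"
    proof (cases "e = a")
      case True
      have "(\<Prod>i<k. psum TYPE('a) (b i + e i)) = (\<Prod>i<k. -1)"
      proof (intro prod.cong refl)
        fix i assume "i \<in> {..<k}"
        hence "a i \<le> ?q" using ab by simp
        hence "b i + e i = ?q" unfolding True b_def by (rule le_add_diff_inverse2)
        thus "psum TYPE('a) (b i + e i) = -1" using psum_dvd[OF p] q1 by simp
      qed
      thus ?thesis using True by simp
    next
      case False
      have eE: "e \<in> exps TYPE('a) k" "(\<Sum>i<k. e i) \<le> ee" using e by (auto simp: E_def simp del: of_nat_sum)
      have "\<exists>i<k. psum TYPE('a) (b i + e i) = 0"
      proof (rule ccontr)
        assume "\<not> ?thesis"
        hence nz: "\<And>i. i < k \<Longrightarrow> psum TYPE('a) (b i + e i) \<noteq> 0" by blast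
        have ge: "a i \<le> e i" if i: "i < k" for i
        proof -
          have bz: "b i + e i \<noteq> 0" using nz[OF i] psum_0 by metis
          have "?q dvd (b i + e i)"
          proof (rule ccontr)
            assume "\<not> ?q dvd (b i + e i)"
            moreover have "b i + e i \<ge> 1" using bz by linarith
            ultimately have "psum TYPE('a) (b i + e i) = 0" using psum_ndvd[OF p, of "b i + e i"] by simp
            thus False using nz[OF i] by simp
          qed
          then obtain c where c: "b i + e i = ?q * c" by (elim dvdE)
          have "c \<noteq> 0" using c bz by auto
          hence "?q * 1 \<le> ?q * c" by (intro mult_le_mono2) simp
          hence "?q \<le> b i + e i" using c by simp
          thus ?thesis using ab[OF i] unfolding b_def by linarith
        qed
        have "\<forall>i<k. e i = a i"
        proof (rule ccontr)
          assume "\<not> (\<forall>i<k. e i = a i)"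
          then obtain i where i: "i < k" "e i \<noteq> a i" by blast
          have "a i < e i" using ge[OF i(1)] i(2) by simp
          hence "(\<Sum>i<k. a i) < (\<Sum>i<k. e i)"
            using ge i(1) by (intro sum_strict_mono_ex1) auto
          thus False using a(2) eE(2) by simp
        qed
        hence "e = a" using eE(1) aE unfolding exps_def by (auto intro!: ext) (metis not_le)
        thus False using False by simp
      qed
      then obtain i where "i < k" "psum TYPE('a) (b i + e i) = 0" by blast
      thus ?thesis using False by (metis finite_lessThan lessThan_iff prod_zero)
    qed
    finally show ?thesis .
  qed
  have "inner_prod k (Defs.monom k b) h = (\<Sum>x\<in>vecs k. Defs.monom k b x * (\<Sum>e\<in>E. c e * Defs.monom k e x))"
    unfolding inner_prod_def using c by (intro sum.cong) auto
  also have "\<dots> = (\<Sum>e\<in>E. c e * (\<Sum>x\<in>vecs k. Defs.monom k b x * Defs.monom k e x))"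
    by (simp add: sum_distrib_left sum.swap[of _ E] mult_ac)
  also have "\<dots> = (\<Sum>e\<in>E. if e = a then c e * (-1) ^ k else 0)"
    using trm by (intro sum.cong) auto
  also have "\<dots> = c a * (-1) ^ k" using a(1) finE by (simp add: sum.delta)
  finally have "inner_prod k (Defs.monom k b) h \<noteq> 0" using a(3) by simp
  thus ?thesis using sb by blast
qed


theorem lemma3p2:
  fixes h :: "(nat \<Rightarrow> 'a::{finite,field}) \<Rightarrow> 'a"
    and n d k :: nat
  assumes "prime CARD('a)"
    and "n > 0" and "d > 0"
    and "int k \<ge> \<lceil>real (d + 1) / real (CARD('a) - 1)\<rceil>"
    and "has_degree k h (int k * (int CARD('a) - 1) - (int d + 1))"
  shows "RM n d = Fchar n k h"
proof -
  let ?p = "CARD('a)"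
  have p2: "?p \<ge> 2" using prime_ge_2_nat[OF assms(1)] .
  have kp: "d + 1 \<le> k * (?p - 1)"
  proof -
    have "real (d + 1) / real (?p - 1) \<le> real k"
      using assms(4) by (simp add: ceiling_le_iff)
    moreover have "real (?p - 1) > 0" using p2 by simp
    ultimately have "real (d + 1) \<le> real k * real (?p - 1)" by (simp add: divide_le_eq)
    hence "real (d + 1) \<le> real (k * (?p - 1))" by simp
    thus ?thesis by (simp only: of_nat_le_iff)
  qed
  define ee where "ee = k * (?p - 1) - (d + 1)"
  have eei: "int ee = int k * (int ?p - 1) - (int d + 1)"
  proof -
    have "int ee = int (k * (?p - 1)) - int (d + 1)" using kp by (simp add: ee_def of_nat_diff)
    also have "int (k * (?p - 1)) = int k * (int ?p - 1)" using p2 by (simp add: of_nat_diff)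
    finally show ?thesis by simp
  qed
  have h1: "deg_le k h (int ee)" and h2: "\<not> deg_le k h (int ee - 1)"
    using assms(5) unfolding has_degree_def eei[symmetric] by auto
  show ?thesis
  proof (intro set_eqI iffI)
    fix f :: "(nat \<Rightarrow> 'a) \<Rightarrow> 'a" assume f: "f \<in> RM n d"
    have "f \<in> funs n" using f by (simp add: RM_def)
    moreover have "\<forall>T\<in>affine_maps k n. inner_prod k (f \<circ> T) h = 0"
    proof
      fix T :: "(nat \<Rightarrow> 'a) \<Rightarrow> nat \<Rightarrow> 'a" assume T: "T \<in> affine_maps k n"
      have "d + ee < k * (?p - 1)" using kp by (simp add: ee_def)
      thus "inner_prod k (f \<circ> T) h = 0" using partA[OF assms(1) f T h1] by simp
    qed
    ultimately show "f \<in> Fchar n k h" by (simp add: Fchar_def)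
  next
    fix f :: "(nat \<Rightarrow> 'a) \<Rightarrow> 'a" assume f: "f \<in> Fchar n k h"
    have fn: "f \<in> funs n" using f by (simp add: Fchar_def)
    have "deg_le n f (int d)"
    proof (rule ccontr)
      assume nd: "\<not> deg_le n f (int d)"
      obtain c m where c: "\<forall>x\<in>vecs n. f x = (\<Sum>e\<in>exps TYPE('a) n. c e * Defs.monom n e x)"
        and m: "m \<in> exps TYPE('a) n" "d < (\<Sum>i<n. m i)" "c m \<noteq> 0"
        using not_deg_le_coef[OF assms(1) nd] by blast
      have cl: "Cl h k n f" using Fchar_Cl[OF f] .
      have clm: "Cl h k n (Defs.monom n m :: (nat \<Rightarrow> 'a) \<Rightarrow> 'a)"
        using Cl_monom[OF assms(1) cl c m(1) m(3)] .
      have "\<forall>i<n. m i \<le> ?p - 1" using m(1) by (auto simp: exps_def less_Suc_eq_le)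
      then obtain N' u where u: "Cl h k N' (Defs.monom N' u :: (nat \<Rightarrow> 'a) \<Rightarrow> 'a)" "\<forall>i<N'. u i \<le> 1"
          "(\<Sum>i<N'. u i) = (\<Sum>i<n. m i)"
        using Cl_unit[OF assms(1) clm] by blast
      obtain b where b: "(\<Sum>i<k. b i) + ee = k * (?p - 1)" "inner_prod k (Defs.monom k b) h \<noteq> 0"
        using pair_nonzero[OF assms(1) h1 h2] by blast
      have "(\<Sum>i<k. b i) \<le> (\<Sum>i<N'. u i)" using b(1) u(3) m(2) kp by (simp add: ee_def)
      hence "Cl h k k (Defs.monom k b :: (nat \<Rightarrow> 'a) \<Rightarrow> 'a)" by (rule Cl_merge[OF u(1) u(2)])
      hence "inner_prod k (Defs.monom k b) h = 0" by (rule Cl_id)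
      thus False using b(2) by simp
    qed
    thus "f \<in> RM n d" using fn by (simp add: RM_def)
  qed
qed

end
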